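(* Let $n\ge2$. For $s=1,\dots,n-1$, $$(1+\mathfrak p_n)^*\cap(1+\mathfrak a_{n,s})^*=\Big(1+\sum_{|I|=s,\ n\in I}\mathfrak p_I\Big)^*,$$ and $(1+\mathfrak p_n)^*\cap(1+\mathfrak a_{n,n})^*=(1+F_n)^*$.
   Context: $K$ is a field. $\mathbb S_n$ is the $K$-algebra generated by $x_1,\dots,x_n,y_1,\dots,y_n$ with relations $y_ix_i=1$ and $[x_i,y_j]=[x_i,x_j]=[y_i,y_j]=0$ ($i\ne j$). $e_i:=1-x_iy_i$; $\mathfrak p_i$ is the ideal of $\mathbb S_n$ generated by $e_i$; for $I\subseteq\{1,\dots,n\}$, $\mathfrak p_I:=\prod_{i\in I}\mathfrak p_i$ (which equals $\bigcap_{i\in I}\mathfrak p_i$); $\mathfrak a_{n,s}:=\sum_{|I|=s}\mathfrak p_I$ for $1\le s\le n$; $F_n:=\mathfrak p_{\{1,\dots,n\}}=\mathfrak a_{n,n}$. For a proper ideal $\mathfrak b$ of $\mathbb S_n$, $(1+\mathfrak b)^*$ denotes the group of units of $\mathbb S_n$ lying in $1+\mathfrak b$. *)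

theory Defs
  imports "HOL-Library.Poly_Mapping" "HOL-Algebra.Ideal_Product"
begin

text \<open>A monomial x^a y^b (a, b multi-indices, a i = exponent of x_i, b i = exponent of y_i).
  Since y_i x_i = 1 and all generators with different indices commute, every element of
  S_n is uniquely a K-linear combination of such monomials (normal form), and
  x^a y^b * x^c y^d = x^(a + (c - b)) y^(d + (b - c)) coordinatewise (truncated subtraction).
  This is the bicyclic monoid, written additively so that the library monoid algebra
  (finitely supported functions with convolution) applies.\<close>

datatype bmon = BM "nat \<Rightarrow> nat" "nat \<Rightarrow> nat"

instantiation bmon :: monoid_add
begin
definition zero_bmon :: bmon where "zero_bmon = BM (\<lambda>_. 0) (\<lambda>_. 0)"
fun plus_bmon :: "bmon \<Rightarrow> bmon \<Rightarrow> bmon" where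
  "plus_bmon (BM a b) (BM c d) = BM (\<lambda>i. a i + (c i - b i)) (\<lambda>i. d i + (b i - c i))"
instance
proof
  fix p q r :: bmon
  show "p + q + r = p + (q + r)"
    by (cases p; cases q; cases r) (auto simp: fun_eq_iff split: nat_diff_split)
  show "0 + p = p" by (cases p) (simp add: zero_bmon_def)
  show "p + 0 = p" by (cases p) (simp add: zero_bmon_def)
qed
end

type_synonym 'k jac = "bmon \<Rightarrow>\<^sub>0 'k"

definition mon_n :: "nat \<Rightarrow> bmon set" where
  "mon_n n = {BM a b | a b. \<forall>j. j \<notin> {1..n} \<longrightarrow> a j = 0 \<and> b j = 0}"

definition S :: "nat \<Rightarrow> ('k::field) jac ring" where
  "S n = \<lparr> carrier = {f. Poly_Mapping.keys f \<subseteq> mon_n n}, mult = (*), one = 1, zero = 0, add = (+) \<rparr>"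

definition xg :: "nat \<Rightarrow> ('k::field) jac" where
  "xg i = Poly_Mapping.single (BM (\<lambda>j. if j = i then 1 else 0) (\<lambda>_. 0)) 1"

definition yg :: "nat \<Rightarrow> ('k::field) jac" where
  "yg i = Poly_Mapping.single (BM (\<lambda>_. 0) (\<lambda>j. if j = i then 1 else 0)) 1"

definition eg :: "nat \<Rightarrow> ('k::field) jac" where
  "eg i = 1 - xg i * yg i"

definition pid :: "nat \<Rightarrow> nat \<Rightarrow> ('k::field) jac set" where
  "pid n i = genideal (S n) {eg i}"

definition pI :: "nat \<Rightarrow> nat set \<Rightarrow> ('k::field) jac set" where
  "pI n I = foldr (\<lambda>i J. ideal_prod (S n) (pid n i) J) (sorted_list_of_set I) (carrier (S n))"

definition ideal_sum :: "('k::field) jac ring \<Rightarrow> ('k jac set) set \<Rightarrow> 'k jac set" where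
  "ideal_sum R \<I> = genideal R (\<Union>\<I>)"

definition a_ns :: "nat \<Rightarrow> nat \<Rightarrow> ('k::field) jac set" where
  "a_ns n s = ideal_sum (S n) {pI n I | I. I \<subseteq> {1..n} \<and> card I = s}"

definition F :: "nat \<Rightarrow> ('k::field) jac set" where
  "F n = pI n {1..n}"

definition units_1p :: "('a, 'm) ring_scheme \<Rightarrow> 'a set \<Rightarrow> 'a set" where
  "units_1p R b = Units R \<inter> (\<lambda>u. \<one>\<^bsub>R\<^esub> \<oplus>\<^bsub>R\<^esub> u) ` b"

end

theory Submission imports Defs begin

lemma mon_n_zero: "(0::bmon) \<in> mon_n n"
  by (auto simp: mon_n_def zero_bmon_def)

lemma mon_n_plus: "p \<in> mon_n n \<Longrightarrow> q \<in> mon_n n \<Longrightarrow> p + q \<in> mon_n n"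
  by (auto simp: mon_n_def)

lemma carrier_S: "carrier (S n :: ('k::field) jac ring) = {f. Poly_Mapping.keys f \<subseteq> mon_n n}"
  by (simp add: S_def)
lemma S_ops[simp]: "mult (S n :: ('k::field) jac ring) = (*)" "add (S n :: ('k::field) jac ring) = (+)"
  "one (S n :: ('k::field) jac ring) = 1" "zero (S n :: ('k::field) jac ring) = 0"
  by (simp_all add: S_def)

lemma car_add: "f \<in> carrier (S n) \<Longrightarrow> g \<in> carrier (S n) \<Longrightarrow> (f + g :: ('k::field) jac) \<in> carrier (S n)"
  using keys_add[of f g] by (auto simp: carrier_S)
lemma car_mult: "f \<in> carrier (S n) \<Longrightarrow> g \<in> carrier (S n) \<Longrightarrow> (f * g :: ('k::field) jac) \<in> carrier (S n)"
  using keys_mult[of f g] by (auto simp: carrier_S intro!: mon_n_plus)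
lemma car_uminus: "f \<in> carrier (S n) \<Longrightarrow> (- f :: ('k::field) jac) \<in> carrier (S n)"
  by (auto simp: carrier_S)
lemma car_zero: "(0:: ('k::field) jac) \<in> carrier (S n)"
  by (auto simp: carrier_S)
lemma car_one: "(1:: ('k::field) jac) \<in> carrier (S n)"
  by (auto simp: carrier_S zero_bmon_def[symmetric] mon_n_zero)
lemma car_diff: "f \<in> carrier (S n) \<Longrightarrow> g \<in> carrier (S n) \<Longrightarrow> (f - g :: ('k::field) jac) \<in> carrier (S n)"
  using car_add[OF _ car_uminus] by (metis diff_conv_add_uminus)
lemma car_pow: "f \<in> carrier (S n) \<Longrightarrow> (f ^ k :: ('k::field) jac) \<in> carrier (S n)"
  by (induction k) (auto intro: car_one car_mult)

lemma ring_S: "ring (S n :: ('k::field) jac ring)"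
proof (rule ringI)
  show "abelian_group (S n :: ('k::field) jac ring)"
    by (rule abelian_groupI) (auto intro: car_add car_zero car_uminus add.assoc add.commute
        intro!: bexI[of _ "- _"])
  show "monoid (S n :: ('k::field) jac ring)"
    by (rule monoidI) (auto intro: car_mult car_one mult.assoc)
qed (auto simp: distrib_left distrib_right)

lemma xg_car: "i \<in> {1..n} \<Longrightarrow> (xg i :: ('k::field) jac) \<in> carrier (S n)"
  by (auto simp: carrier_S xg_def mon_n_def)
lemma yg_car: "i \<in> {1..n} \<Longrightarrow> (yg i :: ('k::field) jac) \<in> carrier (S n)"
  by (auto simp: carrier_S yg_def mon_n_def)
lemma eg_car: "i \<in> {1..n} \<Longrightarrow> (eg i :: ('k::field) jac) \<in> carrier (S n)"
  by (auto simp: eg_def intro!: car_diff car_one car_mult xg_car yg_car)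

lemma yx: "(yg i * xg i :: ('k::field) jac) = 1"
  by (simp add: yg_def xg_def mult_single zero_bmon_def[symmetric] flip: single_one)

lemma (in ring) ideal_by_closure:
  assumes "T \<subseteq> carrier R" "\<zero> \<in> T" "\<And>a b. a \<in> T \<Longrightarrow> b \<in> T \<Longrightarrow> a \<oplus> b \<in> T"
    "\<And>a x. a \<in> T \<Longrightarrow> x \<in> carrier R \<Longrightarrow> x \<otimes> a \<in> T"
    "\<And>a x. a \<in> T \<Longrightarrow> x \<in> carrier R \<Longrightarrow> a \<otimes> x \<in> T"
  shows "ideal T R"
proof (rule idealI)
  show "ring R" by (rule ring_axioms)
  show "subgroup T (add_monoid R)"
  proof
    fix a assume a: "a \<in> T"
    have "inv\<^bsub>add_monoid R\<^esub> a = \<ominus> a" by (simp add: a_inv_def)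
    also have "\<dots> = (\<ominus> \<one>) \<otimes> a" using a assms(1) by (simp add: l_minus subsetD)
    also have "\<dots> \<in> T" using a by (intro assms(4)) auto
    finally show "inv\<^bsub>add_monoid R\<^esub> a \<in> T" .
  qed (use assms in auto)
qed (use assms in auto)

lemma ypow: "(yg i :: ('k::field) jac) ^ M = Poly_Mapping.single (BM (\<lambda>_. 0) (\<lambda>j. if j = i then M else 0)) 1"
proof (induction M)
  case 0 then show ?case by (simp add: zero_bmon_def[symmetric] flip: single_one)
next
  case (Suc M)
  then show ?case
    by (simp add: yg_def mult_single) (rule arg_cong2[where f=Poly_Mapping.single], auto simp: fun_eq_iff)
qed

lemma y_comm_single:
  assumes "a i = 0"
  shows "Poly_Mapping.single (BM a b) c * (yg i :: ('k::field) jac) ^ M = yg i ^ M * Poly_Mapping.single (BM a b) c"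
  using assms by (simp add: ypow mult_single)
    (rule arg_cong2[where f=Poly_Mapping.single], auto simp: fun_eq_iff)

lemma y_kill:
  assumes "a i \<le> A"
  shows "\<exists>a' b'. a' i = 0 \<and> (yg i :: ('k::field) jac) ^ A * Poly_Mapping.single (BM a b) c = Poly_Mapping.single (BM a' b') c"
  using assms by (simp add: ypow mult_single) (rule exI, rule conjI[rotated], rule exI, rule refl, simp)

lemma sum_single_expand: "f = (\<Sum>k\<in>Poly_Mapping.keys f. Poly_Mapping.single k (Poly_Mapping.lookup f k))"
proof (rule poly_mapping_eqI)
  fix k'
  show "Poly_Mapping.lookup f k' = Poly_Mapping.lookup (\<Sum>k\<in>Poly_Mapping.keys f. Poly_Mapping.single k (Poly_Mapping.lookup f k)) k'"
    by (cases "k' \<in> Poly_Mapping.keys f")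
      (auto simp: lookup_sum lookup_single when_def in_keys_iff)
qed

fun xexp :: "nat \<Rightarrow> bmon \<Rightarrow> nat" where "xexp i (BM a b) = a i"

lemma y_commute_after:
  "\<exists>A. \<forall>M. (yg i :: ('k::field) jac) ^ M * (yg i ^ A * r) = (yg i ^ A * r) * yg i ^ M"
proof -
  define A where "A = (\<Sum>k\<in>Poly_Mapping.keys r. xexp i k)"
  have comm: "yg i ^ M * (yg i ^ A * Poly_Mapping.single k (Poly_Mapping.lookup r k))
     = (yg i ^ A * Poly_Mapping.single k (Poly_Mapping.lookup r k)) * yg i ^ M"
    if k: "k \<in> Poly_Mapping.keys r" for k M
  proof -
    obtain a b where kab: "k = BM a b" by (cases k)
    have "a i \<le> A" unfolding A_def using k kab
      by (metis finite_keys member_le_sum xexp.simps zero_le)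
    then obtain a' b' where "a' i = 0" and
      eq: "(yg i :: ('k::field) jac) ^ A * Poly_Mapping.single (BM a b) (Poly_Mapping.lookup r k) = Poly_Mapping.single (BM a' b') (Poly_Mapping.lookup r k)"
      using y_kill by blast
    then show ?thesis using y_comm_single[of a' i b' "Poly_Mapping.lookup r k" M] kab by simp
  qed
  have "yg i ^ M * (yg i ^ A * r) = (yg i ^ A * r) * yg i ^ M" for M
    apply (subst (1 2) sum_single_expand[of r])
    apply (simp add: sum_distrib_left sum_distrib_right comm)
    done
  then show ?thesis by blast
qed

lemma ye: "(yg i * eg i :: ('k::field) jac) = 0"
proof -
  have "(yg i * eg i :: ('k::field) jac) = yg i - (yg i * xg i) * yg i"
    by (simp add: eg_def algebra_simps)
  then show ?thesis by (simp add: yx)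
qed

lemma pid_ykill:
  assumes i: "i \<in> {1..n}" and f: "f \<in> (pid n i :: ('k::field) jac set)"
  shows "\<exists>N. yg i ^ N * f = 0"
proof -
  interpret R: ring "S n :: 'k jac ring" by (rule ring_S)
  define T where "T = {f \<in> carrier (S n :: 'k jac ring). \<exists>N. yg i ^ N * f = 0}"
  have "ideal T (S n)"
  proof (rule R.ideal_by_closure)
    show "T \<subseteq> carrier (S n)" by (auto simp: T_def)
    show "\<zero>\<^bsub>S n\<^esub> \<in> T" by (auto simp: T_def car_zero)
  next
    fix a b :: "'k jac" assume "a \<in> T" "b \<in> T"
    then obtain N1 N2 where a: "a \<in> carrier (S n)" "yg i ^ N1 * a = 0"
      and b: "b \<in> carrier (S n)" "yg i ^ N2 * b = 0" by (auto simp: T_def)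
    have "yg i ^ (N1 + N2) * (a + b) = yg i ^ N2 * (yg i ^ N1 * a) + yg i ^ N1 * (yg i ^ N2 * b)"
    proof -
      have e: "(yg i :: 'k jac) ^ (N1 + N2) = yg i ^ N2 * yg i ^ N1" "(yg i :: 'k jac) ^ (N1 + N2) = yg i ^ N1 * yg i ^ N2"
        by (simp_all only: power_add[symmetric] add.commute)
      show ?thesis unfolding distrib_left by (metis e mult.assoc)
    qed
    then show "a \<oplus>\<^bsub>S n\<^esub> b \<in> T" using a b by (auto simp: T_def car_add)
  next
    fix a x :: "'k jac" assume "a \<in> T" and x: "x \<in> carrier (S n)"
    then obtain N where a: "a \<in> carrier (S n)" "yg i ^ N * a = 0" by (auto simp: T_def)
    obtain A where A: "\<And>M. (yg i :: 'k jac) ^ M * (yg i ^ A * (x::'k jac)) = (yg i ^ A * x) * yg i ^ M"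
      using y_commute_after by blast
    have "yg i ^ (N + A) * (x * a) = (yg i ^ N * (yg i ^ A * x)) * a"
      by (simp add: power_add mult.assoc)
    also have "\<dots> = (yg i ^ A * x) * (yg i ^ N * a)" by (simp add: A mult.assoc)
    finally show "x \<otimes>\<^bsub>S n\<^esub> a \<in> T" using a x by (auto simp: T_def car_mult)
    have "yg i ^ N * (a * x) = 0" by (simp add: mult.assoc[symmetric] a)
    then show "a \<otimes>\<^bsub>S n\<^esub> x \<in> T" using a x by (auto simp: T_def car_mult)
  qed
  moreover have "eg i \<in> T" using eg_car[OF i] ye[of i] by (auto simp: T_def intro!: exI[of _ 1])
  ultimately have "pid n i \<subseteq> T" unfolding pid_def by (intro R.genideal_minimal) auto
  then show ?thesis using f by (auto simp: T_def)
qed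

lemma telescope: "(\<Sum>j<N. x ^ j * (1 - x * y) * y ^ j) = (1::'a::ring_1) - x ^ N * y ^ N"
proof (induction N)
  case (Suc N)
  have e: "x ^ Suc N = x ^ N * x" "y ^ Suc N = y * y ^ N" by (rule power_Suc2, rule power_Suc)
  have "x ^ N * (1 - x * y) * y ^ N = x ^ N * y ^ N - x ^ Suc N * y ^ Suc N"
    unfolding e by (simp only: right_diff_distrib left_diff_distrib mult_1_right mult.assoc)
  then show ?case using Suc by simp
qed simp

lemma pid_inter_prod:
  assumes i: "i \<in> {1..n}" and f: "f \<in> (pid n i :: ('k::field) jac set)" and J: "ideal J (S n)"
    and fJ: "f \<in> J"
  shows "f \<in> ideal_prod (S n) (pid n i) J"
proof -
  interpret R: ring "S n :: 'k jac ring" by (rule ring_S)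
  have P: "ideal (pid n i) (S n :: 'k jac ring)" unfolding pid_def
    by (rule R.genideal_ideal) (use eg_car[OF i] in auto)
  have ePi: "eg i \<in> (pid n i :: 'k jac set)" unfolding pid_def
    by (rule R.genideal_self') (use eg_car[OF i] in auto)
  obtain N where N: "yg i ^ N * f = 0" using pid_ykill[OF i f] by blast
  have fc: "f \<in> carrier (S n)" using fJ by (rule ideal.Icarr[OF J])
  have "f = (1 - xg i ^ N * yg i ^ N) * f" using N by (simp add: left_diff_distrib mult.assoc)
  also have "\<dots> = (\<Sum>j<N. (xg i ^ j * eg i) * (yg i ^ j * f))"
    unfolding telescope[symmetric] sum_distrib_right eg_def[symmetric] by (simp only: mult.assoc)
  also have "\<dots> \<in> ideal_prod (S n) (pid n i) J"
  proof (induction N)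
    case 0
    have "\<zero>\<^bsub>S n\<^esub> \<otimes>\<^bsub>S n\<^esub> \<zero>\<^bsub>S n\<^esub> \<in> ideal_prod (S n) (pid n i) J"
      by (rule ideal_prod.prod; rule additive_subgroup.zero_closed, rule ideal.axioms(1), rule P J)
    then show ?case by simp
  next
    case (Suc N)
    have "(xg i ^ N * eg i) \<otimes>\<^bsub>S n\<^esub> (yg i ^ N * f) \<in> ideal_prod (S n) (pid n i) J"
    proof (rule ideal_prod.prod)
      show "xg i ^ N * eg i \<in> (pid n i :: 'k jac set)"
        using ideal.I_l_closed[OF P ePi car_pow[OF xg_car[OF i]]] by simp
      show "yg i ^ N * f \<in> J"
        using ideal.I_l_closed[OF J fJ car_pow[OF yg_car[OF i]]] by simp
    qed
    then show ?case using ideal_prod.sum[OF Suc] by (simp add: add.commute)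
  qed
  finally show ?thesis .
qed

lemma pid_ideal: "i \<in> {1..n} \<Longrightarrow> ideal (pid n i :: ('k::field) jac set) (S n)"
  unfolding pid_def by (rule ring.genideal_ideal[OF ring_S]) (use eg_car in auto)

lemma foldr_pI:
  assumes "set L \<subseteq> {1..n}"
  shows "foldr (\<lambda>i J. ideal_prod (S n) (pid n i) J) L (carrier (S n :: ('k::field) jac ring)) = carrier (S n) \<inter> \<Inter> (pid n ` set L)
     \<and> ideal (foldr (\<lambda>i J. ideal_prod (S n) (pid n i) J) L (carrier (S n :: ('k::field) jac ring))) (S n)"
  using assms
proof (induction L)
  case Nil
  have "ideal (carrier (S n :: 'k jac ring)) (S n)" by (rule ring.oneideal[OF ring_S])
  then show ?case by simp
next
  case (Cons i L)
  interpret R: ring "S n :: 'k jac ring" by (rule ring_S)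
  define J where "J = foldr (\<lambda>i J. ideal_prod (S n) (pid n i) J) L (carrier (S n :: ('k::field) jac ring))"
  have i: "i \<in> {1..n}" using Cons.prems by simp
  have sL: "set L \<subseteq> {1..n}" using Cons.prems by simp
  note h = Cons.IH[OF sL]
  have IH1: "J = carrier (S n) \<inter> \<Inter> (pid n ` set L)" unfolding J_def using h by (rule conjunct1)
  have IH2: "ideal J (S n)" unfolding J_def using h by (rule conjunct2)
  have P: "ideal (pid n i :: 'k jac set) (S n)" by (rule pid_ideal[OF i])
  have eq: "foldr (\<lambda>i J. ideal_prod (S n) (pid n i) J) (i # L) (carrier (S n :: ('k::field) jac ring)) = ideal_prod (S n) (pid n i) J"
    unfolding J_def by (rule foldr.simps(2)[THEN fun_cong, unfolded o_def])
  have e1: "ideal_prod (S n) (pid n i) J = pid n i \<inter> J"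
  proof
    show "ideal_prod (S n) (pid n i) J \<subseteq> pid n i \<inter> J" by (rule R.ideal_prod_inter[OF P IH2])
    show "pid n i \<inter> J \<subseteq> ideal_prod (S n) (pid n i) J"
    proof
      fix x assume "x \<in> pid n i \<inter> J"
      then show "x \<in> ideal_prod (S n) (pid n i) J" using pid_inter_prod[OF i _ IH2, of x] by simp
    qed
  qed
  have e2: "pid n i \<inter> J = carrier (S n) \<inter> \<Inter> (pid n ` set (i # L))"
    unfolding IH1 using ideal.Icarr[OF P] by auto
  have e3: "ideal (ideal_prod (S n) (pid n i) J) (S n)" by (rule R.ideal_prod_is_ideal[OF P IH2])
  show ?case unfolding eq using e1 e2 e3 by simp
qed

lemma pI_char:
  assumes "I \<subseteq> {1..n}"
  shows "(pI n I :: ('k::field) jac set) = carrier (S n) \<inter> \<Inter> (pid n ` I) \<and> ideal (pI n I :: ('k::field) jac set) (S n)"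
proof -
  have f: "finite I" using assms finite_subset by blast
  have e: "set (sorted_list_of_set I) = I" using f by simp
  show ?thesis unfolding pI_def using foldr_pI[of "sorted_list_of_set I" n, unfolded e, OF assms] .
qed

lemma inter_eq:
  assumes s: "1 \<le> s" and n: "1 \<le> n"
  shows "(pid n n :: ('k::field) jac set) \<inter> a_ns n s = ideal_sum (S n) {pI n I | I. I \<subseteq> {1..n} \<and> card I = s \<and> n \<in> I}
     \<and> ideal_sum (S n) {pI n I | I. I \<subseteq> {1..n} \<and> card I = s \<and> n \<in> I} \<subseteq> (carrier (S n :: ('k::field) jac ring))"
proof -
  interpret R: ring "S n :: 'k jac ring" by (rule ring_S)
  define A where "A = (\<Union> {pI n I | I. I \<subseteq> {1..n} \<and> card I = s} :: 'k jac set)"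
  define B where "B = (\<Union> {pI n I | I. I \<subseteq> {1..n} \<and> card I = s \<and> n \<in> I} :: 'k jac set)"
  have nn: "n \<in> {1..n}" using n by auto
  have P: "ideal (pid n n :: 'k jac set) (S n)" by (rule pid_ideal[OF nn])
  have Acar: "A \<subseteq> carrier (S n)" unfolding A_def using pI_char by blast
  have Bcar: "B \<subseteq> carrier (S n)" unfolding B_def using pI_char by blast
  have aA: "a_ns n s = genideal (S n) A" by (simp add: a_ns_def ideal_sum_def A_def)
  have bB: "ideal_sum (S n) {pI n I | I. I \<subseteq> {1..n} \<and> card I = s \<and> n \<in> I} = genideal (S n) B"
    by (simp add: ideal_sum_def B_def)
  have IA: "ideal (genideal (S n) A) (S n)" by (rule R.genideal_ideal[OF Acar])
  have IB: "ideal (genideal (S n) B) (S n)" by (rule R.genideal_ideal[OF Bcar])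
  have BA: "genideal (S n) B \<subseteq> genideal (S n) A"
    by (rule R.genideal_minimal[OF IA]) (use R.genideal_self[OF Acar] in \<open>auto simp: A_def B_def\<close>)
  have BP: "genideal (S n) B \<subseteq> pid n n"
    by (rule R.genideal_minimal[OF P]) (use pI_char in \<open>auto simp: B_def\<close>)
  have sub: "pI n I' \<subseteq> genideal (S n) B" if "I' \<subseteq> {1..n}" "card I' = s" "n \<in> I'" for I'
    using R.genideal_self[OF Bcar] that unfolding B_def by blast
  define Z where "Z = {g \<in> carrier (S n). \<forall>u\<in>pid n n. u * g \<in> genideal (S n) B}"
  have "ideal Z (S n)"
  proof (rule R.ideal_by_closure)
    show "Z \<subseteq> carrier (S n)" by (auto simp: Z_def)
    show "\<zero>\<^bsub>S n\<^esub> \<in> Z"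
      using additive_subgroup.zero_closed[OF ideal.axioms(1)[OF IB]] by (auto simp: Z_def car_zero)
  next
    fix a b :: "'k jac" assume "a \<in> Z" "b \<in> Z"
    then show "a \<oplus>\<^bsub>S n\<^esub> b \<in> Z"
      using additive_subgroup.a_closed[OF ideal.axioms(1)[OF IB]]
      by (auto simp: Z_def distrib_left car_add)
  next
    fix a x :: "'k jac" assume a: "a \<in> Z" and x: "x \<in> carrier (S n)"
    show "x \<otimes>\<^bsub>S n\<^esub> a \<in> Z"
    proof -
      have "u * x \<in> pid n n" if "u \<in> pid n n" for u
        using ideal.I_r_closed[OF P that x] by simp
      then show ?thesis using a x by (auto simp: Z_def car_mult mult.assoc[symmetric])
    qed
    show "a \<otimes>\<^bsub>S n\<^esub> x \<in> Z"
      using a x ideal.I_r_closed[OF IB _ x] by (auto simp: Z_def car_mult mult.assoc[symmetric])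
  qed
  moreover have "A \<subseteq> Z"
  proof
    fix g assume "g \<in> A"
    then obtain I where I: "I \<subseteq> {1..n}" "card I = s" and g: "g \<in> pI n I" unfolding A_def by blast
    have pc: "pI n I = carrier (S n) \<inter> \<Inter> (pid n ` I)" "ideal (pI n I :: 'k jac set) (S n)"
      using pI_char[OF I(1)] by auto
    have gc: "g \<in> carrier (S n)" using g pc by auto
    have "u * g \<in> genideal (S n) B" if u: "u \<in> pid n n" for u
    proof -
      have uc: "u \<in> carrier (S n)" using u ideal.Icarr[OF P] by blast
      have ug1: "u * g \<in> pid n n" using ideal.I_r_closed[OF P u gc] by simp
      have ug2: "u * g \<in> pI n I" using ideal.I_l_closed[OF pc(2) g uc] by simp
      show ?thesis
      proof (cases "n \<in> I")
        case True then show ?thesis using sub[OF I] ug2 by blast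
      next
        case False
        have "I \<noteq> {}" using I s by auto
        then obtain m where m: "m \<in> I" by blast
        define I' where "I' = insert n (I - {m})"
        have fI: "finite I" using I(1) finite_subset by blast
        have c1: "card I \<ge> 1" using m fI by (auto simp: Suc_le_eq card_gt_0_iff)
        have I': "I' \<subseteq> {1..n}" "card I' = s" "n \<in> I'"
          using I m False nn fI c1 by (auto simp: I'_def card_insert_if)
        have "u * g \<in> pI n I'"
          unfolding pI_char[OF I'(1), THEN conjunct1] using ug1 ug2 pc(1) by (auto simp: I'_def)
        then show ?thesis using sub[OF I'] by blast
      qed
    qed
    then show "g \<in> Z" using gc by (auto simp: Z_def)
  qed
  ultimately have AZ: "genideal (S n) A \<subseteq> Z" by (rule R.genideal_minimal)
  have "pid n n \<inter> genideal (S n) A \<subseteq> genideal (S n) B"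
  proof
    fix f assume f: "f \<in> pid n n \<inter> genideal (S n) A"
    then have "f \<in> ideal_prod (S n) (pid n n) (genideal (S n) A)"
      using pid_inter_prod[OF nn _ IA] by blast
    then show "f \<in> genideal (S n) B"
    proof (induction f rule: ideal_prod.induct)
      case (prod i j)
      then show ?case using AZ by (auto simp: Z_def)
    next
      case (sum s1 s2)
      then show ?case using additive_subgroup.a_closed[OF ideal.axioms(1)[OF IB]] by simp
    qed
  qed
  then show ?thesis using BA BP aA bB R.genideal_ideal[OF Bcar] ideal.Icarr[OF IB] by blast
qed

theorem lemma3p1:
  fixes n :: nat
  assumes "2 \<le> n"
  shows "(\<forall>s \<in> {1..n-1}.
           units_1p (S n :: ('k::field) jac ring) (pid n n) \<inter> units_1p (S n) (a_ns n s)
           = units_1p (S n) (ideal_sum (S n) {pI n I | I. I \<subseteq> {1..n} \<and> card I = s \<and> n \<in> I}))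
      \<and> units_1p (S n :: ('k::field) jac ring) (pid n n) \<inter> units_1p (S n) (a_ns n n)
           = units_1p (S n) (F n)"
proof -
  interpret R: ring "S n :: 'k jac ring" by (rule ring_S)
  have n1: "1 \<le> n" using assms by simp
  have inj: "inj (\<lambda>u::'k jac. \<one>\<^bsub>S n\<^esub> \<oplus>\<^bsub>S n\<^esub> u)" by (simp add: inj_def)
  have U: "units_1p (S n) P \<inter> units_1p (S n) A = units_1p (S n) (P \<inter> A)" for P A :: "'k jac set"
    unfolding units_1p_def image_Int[OF inj] by blast
  have part1: "units_1p (S n :: 'k jac ring) (pid n n) \<inter> units_1p (S n) (a_ns n s)
           = units_1p (S n) (ideal_sum (S n) {pI n I | I. I \<subseteq> {1..n} \<and> card I = s \<and> n \<in> I})"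
    if "s \<in> {1..n-1}" for s
    unfolding U using inter_eq[of s n, where 'k='k] that n1 by simp
  have fam: "{pI n I | I. I \<subseteq> {1..n} \<and> card I = n \<and> n \<in> I} = {F n :: 'k jac set}"
  proof -
    have "I \<subseteq> {1..n} \<and> card I = n \<and> n \<in> I \<longleftrightarrow> I = {1..n}" for I
    proof
      assume h: "I \<subseteq> {1..n} \<and> card I = n \<and> n \<in> I"
      then show "I = {1..n}" using card_subset_eq[of "{1..n}" I] by simp
    qed (use n1 in auto)
    then show ?thesis by (auto simp: F_def)
  qed
  have Fid: "ideal (F n :: 'k jac set) (S n)" unfolding F_def using pI_char[of "{1..n}" n, where 'k='k] by blast
  have "ideal_sum (S n) {pI n I | I. I \<subseteq> {1..n} \<and> card I = n \<and> n \<in> I} = (F n :: 'k jac set)"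
    unfolding fam ideal_sum_def
  proof
    show "genideal (S n) (\<Union> {F n}) \<subseteq> (F n :: 'k jac set)" by (rule R.genideal_minimal[OF Fid]) simp
    show "(F n :: 'k jac set) \<subseteq> genideal (S n) (\<Union> {F n})" using R.genideal_self[of "F n"] ideal.Icarr[OF Fid] by auto
  qed
  then have part2: "units_1p (S n :: ('k::field) jac ring) (pid n n) \<inter> units_1p (S n) (a_ns n n)
           = units_1p (S n) (F n)"
    unfolding U using inter_eq[of n n, where 'k='k] n1 by simp
  show ?thesis using part1 part2 by blast
qed

end
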